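(* There are absolute constants $\gamma>0$ and $C_0\ge 1$ such that for every integer $k>5$ the following holds. For every (deterministic) terminal-cuts scheme for $k$-terminal networks whose edge costs are integers in $\{1,\dots,n^{C_0}\}$ (where $n$ is the number of vertices), there exists such a $k$-terminal network $(G,c)$ on which the memory $M=P(G,c)$ produced by preprocessing occupies at least $2^{\gamma k}$ machine words, where a machine word consists of $\lceil\log_2 n\rceil$ bits.
   Context: A $k$-terminal network $(G,c)$ is an undirected graph $G$ with edge costs $c$ and a set $Q\subseteq V(G)$ of $k$ terminals. For $S\subset Q$, $S\ne\emptyset,Q$, $\bar S=Q\setminus S$, and $\mathrm{mincut}_{G,c}(S,\bar S)$ is the minimum total cost of the set of edges crossing a cut $(W,V(G)\setminus W)$ with $W\cap Q\in\{S,\bar S\}$. A terminal-cuts (TC) scheme consists of a preprocessing map $P$ that maps each $k$-terminal network $(G,c)$ (with the stated edge costs) to a memory image $M$ (a bit string), and a query map $Q(\cdot\,;\cdot)$ that, given $S\subset Q$ and $M$ only (without access to $(G,c)$), outputs a value, such that $Q(S;P(G,c))=\mathrm{mincut}_{G,c}(S,\bar S)$ for all networks and all $S\subset Q$, $S\neq\emptyset,Q$. Storage is measured in machine words of $\Theta(\log n)$ bits. *)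

theory Defs
  imports Complex_Main
begin

text \<open>A k-terminal network is encoded as a triple (n, c, T):
  vertices are 0..n-1; c u v is the integer cost of the undirected edge {u,v},
  with c u v = 0 meaning "no edge" (so c is symmetric, zero on the diagonal and
  outside the vertex set); T is the set of terminals.\<close>

type_synonym network = "nat \<times> (nat \<Rightarrow> nat \<Rightarrow> nat) \<times> nat set"

definition valid_network :: "nat \<Rightarrow> real \<Rightarrow> network \<Rightarrow> bool" where
  "valid_network k C0 N = (case N of (n, c, T) \<Rightarrow>
      (\<forall>u v. c u v = c v u) \<and>
      (\<forall>u. c u u = 0) \<and>
      (\<forall>u v. \<not> (u < n \<and> v < n) \<longrightarrow> c u v = 0) \<and>
      (\<forall>u v. c u v \<noteq> 0 \<longrightarrow> real (c u v) \<le> real n powr C0) \<and>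
      T \<subseteq> {..<n} \<and> card T = k)"

definition cut_cost :: "network \<Rightarrow> nat set \<Rightarrow> nat" where
  "cut_cost N W = (case N of (n, c, T) \<Rightarrow>
      (\<Sum>u\<in>W. \<Sum>v\<in>{..<n} - W. c u v))"

definition mincut :: "network \<Rightarrow> nat set \<Rightarrow> nat" where
  "mincut N S = (case N of (n, c, T) \<Rightarrow>
      Min {cut_cost N W | W. W \<subseteq> {..<n} \<and> (W \<inter> T = S \<or> W \<inter> T = T - S)})"

definition TC_scheme :: "nat \<Rightarrow> real \<Rightarrow> (network \<Rightarrow> bool list) \<Rightarrow> (nat set \<Rightarrow> bool list \<Rightarrow> nat) \<Rightarrow> bool" where
  "TC_scheme k C0 P Qry = (\<forall>N. valid_network k C0 N \<longrightarrow>
      (\<forall>S. S \<subseteq> snd (snd N) \<and> S \<noteq> {} \<and> S \<noteq> snd (snd N) \<longrightarrow>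
           Qry S (P N) = mincut N S))"

end

theory Submission
  imports Defs "HOL-Library.FuncSet"
begin

lemma sum_if_prod:
  assumes "finite A" "finite B"
  shows "(\<Sum>u\<in>A. \<Sum>v\<in>B. if u \<in> H \<and> v \<in> K then f u v else 0) = (\<Sum>u\<in>A\<inter>H. \<Sum>v\<in>B\<inter>K. f u v)"
proof -
  have "(\<Sum>u\<in>A. \<Sum>v\<in>B. if u \<in> H \<and> v \<in> K then f u v else 0) = (\<Sum>u\<in>A. if u \<in> H then (\<Sum>v\<in>B. if v \<in> K then f u v else 0) else 0)"
    by (rule sum.cong) auto
  also have "\<dots> = (\<Sum>u\<in>A\<inter>H. (\<Sum>v\<in>B. if v \<in> K then f u v else 0))"
    using assms by (simp add: sum.inter_restrict)
  also have "\<dots> = (\<Sum>u\<in>A\<inter>H. \<Sum>v\<in>B\<inter>K. f u v)"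
    using assms by (simp add: sum.inter_restrict)
  finally show ?thesis .
qed

lemma cut_formula:
  fixes e :: "nat \<Rightarrow> nat \<Rightarrow> nat"
  assumes "k + m \<le> n" "W \<subseteq> {..<n}"
  shows "(\<Sum>u\<in>W. \<Sum>v\<in>{..<n} - W. (if k \<le> u \<and> u < k+m \<and> v < k then e (u-k) v else 0) + (if k \<le> v \<and> v < k+m \<and> u < k then e (v-k) u else 0))
     = (\<Sum>x<m. \<Sum>t<k. if (k+x \<in> W) \<noteq> (t \<in> W) then e x t else 0)"
proof -
  have fW: "finite W" using assms(2) finite_subset by blast
  have A: "(\<Sum>u\<in>W. \<Sum>v\<in>{..<n} - W. if k \<le> u \<and> u < k+m \<and> v < k then e (u-k) v else 0)
     = (\<Sum>x<m. \<Sum>t<k. if k+x \<in> W \<and> t \<notin> W then e x t else 0)"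
  proof -
    have "(\<Sum>u\<in>W. \<Sum>v\<in>{..<n} - W. if k \<le> u \<and> u < k+m \<and> v < k then e (u-k) v else 0)
      = (\<Sum>u\<in>W. \<Sum>v\<in>{..<n} - W. if u \<in> {k..<k+m} \<and> v \<in> {..<k} then e (u-k) v else 0)"
      by (intro sum.cong) auto
    also have "\<dots> = (\<Sum>u\<in>W \<inter> {k..<k+m}. \<Sum>v\<in>({..<n} - W) \<inter> {..<k}. e (u-k) v)"
      by (rule sum_if_prod) (use fW in auto)
    also have "\<dots> = (\<Sum>u\<in>{k..<k+m} \<inter> W. \<Sum>v\<in>{..<k} \<inter> (- W). e (u-k) v)"
      using assms by (intro sum.cong) auto
    also have "\<dots> = (\<Sum>u\<in>{k..<k+m}. if u \<in> W then (\<Sum>v<k. if v \<notin> W then e (u-k) v else 0) else 0)"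
      by (simp add: sum.inter_restrict)
    also have "\<dots> = (\<Sum>u\<in>{0+k..<m+k}. if u \<in> W then (\<Sum>v<k. if v \<notin> W then e (u-k) v else 0) else 0)"
      by (simp add: add.commute)
    also have "\<dots> = (\<Sum>x\<in>{0..<m}. if x+k \<in> W then (\<Sum>v<k. if v \<notin> W then e x v else 0) else 0)"
      by (subst sum.shift_bounds_nat_ivl) (intro sum.cong refl; simp only: add_diff_cancel_right')
    also have "\<dots> = (\<Sum>x<m. \<Sum>t<k. if k+x \<in> W \<and> t \<notin> W then e x t else 0)"
      by (intro sum.cong) (auto simp: add.commute atLeast0LessThan)
    finally show ?thesis .
  qed
  have B: "(\<Sum>u\<in>W. \<Sum>v\<in>{..<n} - W. if k \<le> v \<and> v < k+m \<and> u < k then e (v-k) u else 0)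
     = (\<Sum>x<m. \<Sum>t<k. if t \<in> W \<and> k+x \<notin> W then e x t else 0)"
  proof -
    have "(\<Sum>u\<in>W. \<Sum>v\<in>{..<n} - W. if k \<le> v \<and> v < k+m \<and> u < k then e (v-k) u else 0)
      = (\<Sum>u\<in>W. \<Sum>v\<in>{..<n} - W. if u \<in> {..<k} \<and> v \<in> {k..<k+m} then e (v-k) u else 0)"
      by (intro sum.cong) auto
    also have "\<dots> = (\<Sum>u\<in>W \<inter> {..<k}. \<Sum>v\<in>({..<n} - W) \<inter> {k..<k+m}. e (v-k) u)"
      by (rule sum_if_prod) (use fW in auto)
    also have "\<dots> = (\<Sum>u\<in>{..<k} \<inter> W. \<Sum>v\<in>{k..<k+m} \<inter> (- W). e (v-k) u)"
      using assms by (intro sum.cong) auto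
    also have "\<dots> = (\<Sum>u<k. if u \<in> W then (\<Sum>v\<in>{k..<k+m}. if v \<notin> W then e (v-k) u else 0) else 0)"
      by (simp add: sum.inter_restrict)
    also have "\<dots> = (\<Sum>u<k. if u \<in> W then (\<Sum>v\<in>{0+k..<m+k}. if v \<notin> W then e (v-k) u else 0) else 0)"
      by (simp only: add_0 add.commute[of m k])
    also have "\<dots> = (\<Sum>u<k. if u \<in> W then (\<Sum>x\<in>{0..<m}. if x+k \<notin> W then e x u else 0) else 0)"
      by (subst sum.shift_bounds_nat_ivl) (intro sum.cong refl; simp only: add_diff_cancel_right')
    also have "\<dots> = (\<Sum>t<k. \<Sum>x<m. if t \<in> W \<and> k+x \<notin> W then e x t else 0)"
      by (intro sum.cong) (auto simp: add.commute atLeast0LessThan)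
    also have "\<dots> = (\<Sum>x<m. \<Sum>t<k. if t \<in> W \<and> k+x \<notin> W then e x t else 0)"
      by (rule sum.swap)
    finally show ?thesis .
  qed
  have "(\<Sum>u\<in>W. \<Sum>v\<in>{..<n} - W. (if k \<le> u \<and> u < k+m \<and> v < k then e (u-k) v else 0) + (if k \<le> v \<and> v < k+m \<and> u < k then e (v-k) u else 0))
     = (\<Sum>u\<in>W. \<Sum>v\<in>{..<n} - W. if k \<le> u \<and> u < k+m \<and> v < k then e (u-k) v else 0) + (\<Sum>u\<in>W. \<Sum>v\<in>{..<n} - W. if k \<le> v \<and> v < k+m \<and> u < k then e (v-k) u else 0)"
    by (simp add: sum.distrib)
  also have "\<dots> = (\<Sum>x<m. \<Sum>t<k. (if k+x \<in> W \<and> t \<notin> W then e x t else 0) + (if t \<in> W \<and> k+x \<notin> W then e x t else 0))"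
    unfolding A B by (simp add: sum.distrib)
  also have "\<dots> = (\<Sum>x<m. \<Sum>t<k. if (k+x \<in> W) \<noteq> (t \<in> W) then e x t else 0)"
    by (intro sum.cong) auto
  finally show ?thesis .
qed


definition cfun :: "nat \<Rightarrow> nat \<Rightarrow> (nat \<Rightarrow> nat \<Rightarrow> nat) \<Rightarrow> nat \<Rightarrow> nat \<Rightarrow> nat" where
  "cfun k m e u v = (if k \<le> u \<and> u < k+m \<and> v < k then e (u-k) v else 0) + (if k \<le> v \<and> v < k+m \<and> u < k then e (v-k) u else 0)"

lemma per_hub:
  fixes e :: "nat \<Rightarrow> nat \<Rightarrow> nat"
  assumes "W \<inter> {..<k} = S"
  shows "(\<Sum>t<k. if h \<noteq> (t \<in> W) then e x t else 0) = (if h then (\<Sum>t\<in>{..<k} - S. e x t) else (\<Sum>t\<in>S. e x t))"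
proof -
  have S: "S \<subseteq> {..<k}" using assms by auto
  have "(\<Sum>t<k. if h \<noteq> (t \<in> W) then e x t else 0) = (\<Sum>t<k. if h \<noteq> (t \<in> S) then e x t else 0)"
    using assms by (intro sum.cong) auto
  also have "\<dots> = (if h then (\<Sum>t\<in>{..<k} - S. e x t) else (\<Sum>t\<in>S. e x t))"
  proof (cases h)
    case True
    have "(\<Sum>t<k. if t \<in> - S then e x t else 0) = (\<Sum>t\<in>{..<k} \<inter> - S. e x t)"
      by (simp add: sum.inter_restrict)
    then show ?thesis using True by (simp add: Diff_eq)
  next
    case False
    have "(\<Sum>t<k. if t \<in> S then e x t else 0) = (\<Sum>t\<in>{..<k} \<inter> S. e x t)"
      by (simp add: sum.inter_restrict)
    then show ?thesis using False S by (simp add: Int_absorb1 inf.absorb2)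
  qed
  finally show ?thesis .
qed

lemma cost_ge:
  fixes e :: "nat \<Rightarrow> nat \<Rightarrow> nat"
  assumes "k + m \<le> n" "W \<subseteq> {..<n}" "W \<inter> {..<k} = S \<or> W \<inter> {..<k} = {..<k} - S" "S \<subseteq> {..<k}"
  shows "cut_cost (n, cfun k m e, {..<k}) W \<ge> (\<Sum>x<m. min (\<Sum>t\<in>S. e x t) (\<Sum>t\<in>{..<k} - S. e x t))"
proof -
  have "cut_cost (n, cfun k m e, {..<k}) W = (\<Sum>x<m. \<Sum>t<k. if (k+x \<in> W) \<noteq> (t \<in> W) then e x t else 0)"
    unfolding cut_cost_def cfun_def using cut_formula[OF assms(1,2)] by simp
  also have "\<dots> \<ge> (\<Sum>x<m. min (\<Sum>t\<in>S. e x t) (\<Sum>t\<in>{..<k} - S. e x t))"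
  proof (rule sum_mono)
    fix x
    from assms(3) show "min (\<Sum>t\<in>S. e x t) (\<Sum>t\<in>{..<k} - S. e x t) \<le> (\<Sum>t<k. if (k+x \<in> W) \<noteq> (t \<in> W) then e x t else 0)"
    proof
      assume "W \<inter> {..<k} = S"
      from per_hub[OF this] show ?thesis by simp
    next
      assume "W \<inter> {..<k} = {..<k} - S"
      from per_hub[OF this] show ?thesis using assms(4) by (simp add: double_diff)
    qed
  qed
  finally show ?thesis .
qed

lemma mincut_eq:
  fixes e :: "nat \<Rightarrow> nat \<Rightarrow> nat"
  assumes "k + m \<le> n" "S \<subseteq> {..<k}"
  shows "mincut (n, cfun k m e, {..<k}) S = (\<Sum>x<m. min (\<Sum>t\<in>S. e x t) (\<Sum>t\<in>{..<k} - S. e x t))"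
proof -
  let ?N = "(n, cfun k m e, {..<k})"
  let ?a = "\<lambda>x. \<Sum>t\<in>S. e x t" and ?b = "\<lambda>x. \<Sum>t\<in>{..<k} - S. e x t"
  let ?A = "{cut_cost ?N W | W. W \<subseteq> {..<n} \<and> (W \<inter> {..<k} = S \<or> W \<inter> {..<k} = {..<k} - S)}"
  define W0 where "W0 = S \<union> ((+) k ` {x. x < m \<and> ?b x \<le> ?a x})"
  have W0n: "W0 \<subseteq> {..<n}" using assms unfolding W0_def by auto
  have W0k: "W0 \<inter> {..<k} = S" using assms unfolding W0_def by auto
  have hub: "x < m \<Longrightarrow> (k + x \<in> W0) = (?b x \<le> ?a x)" for x
    using assms unfolding W0_def by auto
  have "cut_cost ?N W0 = (\<Sum>x<m. \<Sum>t<k. if (k+x \<in> W0) \<noteq> (t \<in> W0) then e x t else 0)"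
    unfolding cut_cost_def cfun_def using cut_formula[OF assms(1) W0n] by simp
  also have "\<dots> = (\<Sum>x<m. min (?a x) (?b x))"
  proof (rule sum.cong)
    fix x assume "x \<in> {..<m}"
    then show "(\<Sum>t<k. if (k+x \<in> W0) \<noteq> (t \<in> W0) then e x t else 0) = min (?a x) (?b x)"
      unfolding per_hub[OF W0k] using hub[of x] by auto
  qed simp
  finally have c0: "cut_cost ?N W0 = (\<Sum>x<m. min (?a x) (?b x))" .
  have fin: "finite ?A"
  proof -
    have "?A \<subseteq> cut_cost ?N ` Pow {..<n}" by auto
    then show ?thesis using finite_subset by blast
  qed
  have "Min ?A = (\<Sum>x<m. min (?a x) (?b x))"
  proof (rule Min_eqI[OF fin])
    fix y assume "y \<in> ?A"
    then obtain W where "y = cut_cost ?N W" "W \<subseteq> {..<n}" "W \<inter> {..<k} = S \<or> W \<inter> {..<k} = {..<k} - S" by blast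
    then show "(\<Sum>x<m. min (?a x) (?b x)) \<le> y" using cost_ge[OF assms(1) _ _ assms(2)] by blast
  next
    show "(\<Sum>x<m. min (?a x) (?b x)) \<in> ?A" using c0 W0n W0k by (metis (mono_tags, lifting) mem_Collect_eq)
  qed
  then show ?thesis unfolding mincut_def by simp
qed


definition Yset :: "nat \<Rightarrow> nat \<Rightarrow> nat set" where
  "Yset p x = (\<lambda>i. 2*i + 1 + (if bit x i then 1 else 0)) ` {..<p}"

lemma Yset_sub: "2*p < k \<Longrightarrow> Yset p x \<subseteq> {..<k} - {0}"
  unfolding Yset_def by auto

lemma Yset_inj: "inj_on (\<lambda>i. 2*i + 1 + (if bit x i then 1 else 0 :: nat)) A"
  unfolding inj_on_def by (auto split: if_splits)

lemma Yset_card: "card (Yset p x) = p"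
  unfolding Yset_def using card_image[OF Yset_inj, of x "{..<p}"] by simp

lemma bits_eq:
  fixes x y :: nat
  assumes "x < 2^p" "y < 2^p" "\<forall>i<p. bit x i = bit y i"
  shows "x = y"
proof (rule bit_eqI)
  fix i
  show "bit x i = bit y i"
  proof (cases "i < p")
    case True then show ?thesis using assms by auto
  next
    case False
    then have "(2::nat)^p \<le> 2^i" by simp
    then have "x < 2^i" "y < 2^i" using assms(1,2) by linarith+
    then have "x div 2^i = 0" "y div 2^i = 0" by (simp_all add: div_less)
    then show ?thesis by (simp add: bit_iff_odd)
  qed
qed

lemma Yset_notsub:
  assumes "x < 2^p" "y < 2^p" "x \<noteq> y"
  shows "\<not> Yset p x \<subseteq> Yset p y"
proof
  assume sub: "Yset p x \<subseteq> Yset p y"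
  from assms bits_eq obtain i where i: "i < p" "bit x i \<noteq> bit y i" by blast
  let ?v = "2*i + 1 + (if bit x i then 1 else 0 :: nat)"
  have "?v \<in> Yset p x" using i unfolding Yset_def by auto
  with sub have "?v \<in> Yset p y" by auto
  then obtain j where "j < p" "?v = 2*j + 1 + (if bit y j then 1 else 0)" unfolding Yset_def by auto
  then show False using i by (auto split: if_splits) presburger+
qed


definition ew :: "nat \<Rightarrow> (nat \<Rightarrow> nat) \<Rightarrow> nat \<Rightarrow> nat \<Rightarrow> nat" where
  "ew p w x t = w x * (if t = 0 then p - 1 else if t \<in> Yset p x then 1 else 0)"

lemma ind_sum: "finite S \<Longrightarrow> (\<Sum>t\<in>S. (if t \<in> Y then 1 else 0::nat)) = card (S \<inter> Y)"
  by (simp add: sum.inter_restrict[symmetric])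

lemma sumS:
  assumes "S \<subseteq> {..<k} - {0}"
  shows "(\<Sum>t\<in>S. ew p w x t) = w x * card (S \<inter> Yset p x)"
proof -
  have fS: "finite S" using assms finite_subset by blast
  have "(\<Sum>t\<in>S. ew p w x t) = (\<Sum>t\<in>S. w x * (if t \<in> Yset p x then 1 else 0))"
    using assms unfolding ew_def by (intro sum.cong) auto
  also have "\<dots> = w x * card (S \<inter> Yset p x)"
    by (simp add: sum_distrib_left[symmetric] ind_sum[OF fS])
  finally show ?thesis .
qed

lemma sumC:
  assumes "S \<subseteq> {..<k} - {0}" "2*p < k"
  shows "(\<Sum>t\<in>{..<k} - S. ew p w x t) = w x * (p - 1) + w x * card (Yset p x - S)"
proof -
  have k0: "0 < k" using assms by auto
  have eq: "{..<k} - S = insert 0 ({..<k} - S - {0})" using assms k0 by auto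
  have fR: "finite ({..<k} - S - {0})" by auto
  have R: "({..<k} - S - {0}) \<inter> Yset p x = Yset p x - S" using Yset_sub[OF assms(2)] by auto
  have "(\<Sum>t\<in>{..<k} - S. ew p w x t) = (\<Sum>t\<in>insert 0 ({..<k} - S - {0}). ew p w x t)"
    by (rule arg_cong[OF eq])
  also have "\<dots> = ew p w x 0 + (\<Sum>t\<in>{..<k} - S - {0}. ew p w x t)"
    by (rule sum.insert[OF fR]) simp
  also have "(\<Sum>t\<in>{..<k} - S - {0}. ew p w x t) = w x * card (Yset p x - S)"
    using sumS[of "{..<k} - S - {0}" k p w x] R by auto
  finally show ?thesis by (simp add: ew_def)
qed

lemma mincut_single:
  assumes "2 \<le> p" "2*p < k" "k + m \<le> n" "t < k" "t \<noteq> 0"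
  shows "mincut (n, cfun k m (ew p w), {..<k}) {t} = (\<Sum>x<m. w x * card ({t} \<inter> Yset p x))"
proof -
  have S: "{t} \<subseteq> {..<k} - {0}" using assms by auto
  have "mincut (n, cfun k m (ew p w), {..<k}) {t} = (\<Sum>x<m. min (w x * card ({t} \<inter> Yset p x)) (w x * (p - 1) + w x * card (Yset p x - {t})))"
    using mincut_eq[OF assms(3), of "{t}"] assms sumS[OF S] sumC[OF S assms(2)] by simp
  also have "\<dots> = (\<Sum>x<m. w x * card ({t} \<inter> Yset p x))"
  proof (rule sum.cong)
    fix x
    have "card ({t} \<inter> Yset p x) \<le> 1" by (simp add: card_le_Suc0_iff_eq)
    also have "1 \<le> p - 1" using assms by auto
    finally have "w x * card ({t} \<inter> Yset p x) \<le> w x * (p - 1)" by simp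
    then have h: "w x * card ({t} \<inter> Yset p x) \<le> w x * (p - 1) + w x * card (Yset p x - {t})" by linarith
    from min_absorb1[OF h] show "min (w x * card ({t} \<inter> Yset p x)) (w x * (p - 1) + w x * card (Yset p x - {t})) = w x * card ({t} \<inter> Yset p x)"
      .
  qed simp
  finally show ?thesis .
qed

lemma mincut_Y:
  assumes "2 \<le> p" "2*p < k" "k + 2^p \<le> n" "x0 < 2^p"
  shows "mincut (n, cfun k (2^p) (ew p w), {..<k}) (Yset p x0) + w x0 = (\<Sum>x<2^p. w x * card (Yset p x0 \<inter> Yset p x))"
proof -
  let ?Y = "Yset p x0"
  have S: "?Y \<subseteq> {..<k} - {0}" using Yset_sub[OF assms(2)] .
  define f where "f x = min (w x * card (?Y \<inter> Yset p x)) (w x * (p - 1) + w x * card (Yset p x - ?Y))" for x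
  have mc: "mincut (n, cfun k (2^p) (ew p w), {..<k}) ?Y = (\<Sum>x<2^p. f x)"
  proof -
    have "mincut (n, cfun k (2^p) (ew p w), {..<k}) ?Y = (\<Sum>x<2^p. min (sum (ew p w x) ?Y) (sum (ew p w x) ({..<k} - ?Y)))"
      by (rule mincut_eq[OF assms(3)]) (use S in auto)
    then show ?thesis by (simp add: f_def sumS[OF S] sumC[OF S assms(2)])
  qed
  have other: "f x = w x * card (?Y \<inter> Yset p x)" if "x < 2^p" "x \<noteq> x0" for x
  proof -
    have "\<not> Yset p x \<subseteq> ?Y" using Yset_notsub[OF that(1) assms(4) that(2)] .
    then have "?Y \<inter> Yset p x \<subset> Yset p x" by auto
    then have "card (?Y \<inter> Yset p x) < card (Yset p x)" by (rule psubset_card_mono[rotated]) (simp add: Yset_def)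
    then have "card (?Y \<inter> Yset p x) \<le> p - 1" using Yset_card[of p x] by auto
    then have "w x * card (?Y \<inter> Yset p x) \<le> w x * (p - 1)" by simp
    then have h: "w x * card (?Y \<inter> Yset p x) \<le> w x * (p - 1) + w x * card (Yset p x - ?Y)" by linarith
    show ?thesis unfolding f_def by (rule min_absorb1[OF h])
  qed
  have self: "f x0 + w x0 = w x0 * card (?Y \<inter> ?Y)"
  proof -
    have "f x0 = w x0 * (p - 1)" unfolding f_def by (simp add: Yset_card min_absorb2)
    moreover have "card (?Y \<inter> ?Y) = p" using Yset_card by simp
    ultimately show ?thesis using assms(1)
      by (metis Suc_diff_1 add.commute less_le_trans mult_Suc_right pos2)
  qed
  have x0: "x0 \<in> {..<(2::nat)^p}" using assms by auto
  have "(\<Sum>x<2^p. f x) + w x0 = f x0 + w x0 + (\<Sum>x\<in>{..<2^p} - {x0}. f x)"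
    by (simp add: sum.remove[OF _ x0])
  also have "(\<Sum>x\<in>{..<2^p} - {x0}. f x) = (\<Sum>x\<in>{..<2^p} - {x0}. w x * card (?Y \<inter> Yset p x))"
    by (intro sum.cong) (auto simp: other)
  also have "f x0 + w x0 + \<dots> = (\<Sum>x<2^p. w x * card (?Y \<inter> Yset p x))"
    unfolding self by (simp add: sum.remove[OF _ x0])
  finally show ?thesis using mc by simp
qed

lemma card_single_inter: "card ({t} \<inter> Y) = (if t \<in> Y then 1 else 0)"
  by auto

lemma sum_singles:
  assumes "2 \<le> p" "2*p < k" "k + m \<le> n"
  shows "(\<Sum>t\<in>Yset p x0. mincut (n, cfun k m (ew p w), {..<k}) {t}) = (\<Sum>x<m. w x * card (Yset p x0 \<inter> Yset p x))"
proof -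
  have fY: "finite (Yset p x0)" by (simp add: Yset_def)
  have "(\<Sum>t\<in>Yset p x0. mincut (n, cfun k m (ew p w), {..<k}) {t}) = (\<Sum>t\<in>Yset p x0. \<Sum>x<m. w x * (if t \<in> Yset p x then 1 else 0))"
  proof (rule sum.cong)
    fix t assume t: "t \<in> Yset p x0"
    then have "t < k" "t \<noteq> 0" using Yset_sub[OF assms(2), of x0] by auto
    then show "mincut (n, cfun k m (ew p w), {..<k}) {t} = (\<Sum>x<m. w x * (if t \<in> Yset p x then 1 else 0))"
      using mincut_single[OF assms(1,2,3)] by (simp add: card_single_inter)
  qed simp
  also have "\<dots> = (\<Sum>x<m. w x * (\<Sum>t\<in>Yset p x0. (if t \<in> Yset p x then 1 else 0)))"
    by (subst sum.swap) (simp add: sum_distrib_left)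
  also have "\<dots> = (\<Sum>x<m. w x * card (Yset p x0 \<inter> Yset p x))"
    by (simp add: ind_sum[OF fY])
  finally show ?thesis .
qed


lemma ew_le:
  assumes "1 \<le> p" "w x < n" "p \<le> n"
  shows "ew p w x t \<le> n * n"
proof -
  have "ew p w x t \<le> w x * p" unfolding ew_def using assms by (auto intro: mult_le_mono2)
  also have "\<dots> \<le> n * n" using assms by (intro mult_le_mono) auto
  finally show ?thesis .
qed

lemma valid_net:
  assumes "2 \<le> p" "2*p < k" "k + 2^p \<le> n" "w \<in> PiE {..<2^p} (\<lambda>_. {..<n})"
  shows "valid_network k 2 (n, cfun k (2^p) (ew p w), {..<k})"
proof -
  have pn: "p \<le> n" using assms(2,3) by linarith
  have wx: "x < 2^p \<Longrightarrow> w x < n" for x using assms(4) by auto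
  have ewb: "x < 2^p \<Longrightarrow> ew p w x t \<le> n * n" for x t
    using ew_le[of p w x n t] wx[of x] pn assms(1) by auto
  have bnd: "cfun k (2^p) (ew p w) u v \<le> n * n" for u v
    unfolding cfun_def using ewb by auto
  have "real (cfun k (2^p) (ew p w) u v) \<le> real n powr 2" for u v
  proof -
    have n0: "0 < n" using assms by auto
    have "real (cfun k (2^p) (ew p w) u v) \<le> real (n * n)" using bnd[of u v] by linarith
    also have "\<dots> = real n powr 2" using n0 by (simp add: powr_realpow[of "real n" 2, simplified] power2_eq_square)
    finally show ?thesis .
  qed
  moreover have "\<forall>u v. cfun k (2^p) (ew p w) u v = cfun k (2^p) (ew p w) v u"
    unfolding cfun_def by auto
  moreover have "\<forall>u. cfun k (2^p) (ew p w) u u = 0" unfolding cfun_def by auto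
  moreover have "\<forall>u v. \<not> (u < n \<and> v < n) \<longrightarrow> cfun k (2^p) (ew p w) u v = 0"
    unfolding cfun_def using assms(3) by auto
  ultimately show ?thesis unfolding valid_network_def using assms(3) by auto
qed

lemma geom2: "(\<Sum>i\<le>L. (2::nat)^i) < 2^Suc L"
  by (induction L) auto

theorem theorem1p4:
  shows "\<exists>(\<gamma>::real) (C0::real). \<gamma> > 0 \<and> C0 \<ge> 1 \<and>
     (\<forall>k::nat. k > 5 \<longrightarrow>
        (\<forall>P Qry. TC_scheme k C0 P Qry \<longrightarrow>
           (\<exists>N. valid_network k C0 N \<and>
                real (length (P N)) \<ge> 2 powr (\<gamma> * real k) * real_of_int (ceiling (log 2 (real (fst N)))))))"
proof (rule exI[of _ "1/3"], rule exI[of _ 2], intro conjI allI impI)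
  show "(0::real) < 1/3" by simp
  show "(1::real) \<le> 2" by simp
  fix k :: nat and P Qry
  assume k5: "5 < k" and TC: "TC_scheme k 2 P Qry"
  define p where "p = (k - 1) div 2"
  define m :: nat where "m = 2^p"
  define n :: nat where "n = 2^(k+1)"
  define Net where "Net w = (n, cfun k m (ew p w), {..<k})" for w
  define F where "F = PiE {..<m} (\<lambda>_. {..<n})"
  have p2: "2 \<le> p" and pk: "2*p < k" and p3: "k \<le> 3*p" using k5 unfolding p_def by auto
  have kn: "k + m \<le> n"
  proof -
    have "k < 2^k" by (rule less_exp)
    moreover have "m \<le> 2^k" unfolding m_def using pk by (intro power_increasing) auto
    moreover have "n = 2^k + 2^k" unfolding n_def by simp
    ultimately show ?thesis by linarith
  qed
  have valid: "valid_network k 2 (Net w)" if "w \<in> F" for w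
    unfolding Net_def m_def using valid_net[OF p2 pk] kn that unfolding F_def m_def by auto
  have logn: "real_of_int (ceiling (log 2 (real (fst (Net w))))) = real (k+1)" for w
  proof -
    have "real (fst (Net w)) = 2 ^ (k+1)" unfolding Net_def n_def by simp
    then have "log 2 (real (fst (Net w))) = real (k+1)" using log_pow_cancel[of "2::real" "k+1"] by simp
    then show ?thesis by simp
  qed
  have pw: "2 powr (1/3 * real k) \<le> real m"
  proof -
    have "2 powr (1/3 * real k) \<le> 2 powr (real p)" using p3 by (intro powr_mono) auto
    also have "\<dots> = real m" unfolding m_def by (simp add: powr_realpow)
    finally show ?thesis .
  qed
  show "\<exists>N. valid_network k 2 N \<and> 2 powr (1/3 * real k) * real_of_int (ceiling (log 2 (real (fst N)))) \<le> real (length (P N))"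
  proof (rule ccontr)
    assume "\<not> ?thesis"
    then have short: "length (P (Net w)) < m * (k+1)" if "w \<in> F" for w
    proof -
      assume neg: "\<not> (\<exists>N. valid_network k 2 N \<and> 2 powr (1/3 * real k) * real_of_int (ceiling (log 2 (real (fst N)))) \<le> real (length (P N)))"
      have "real (length (P (Net w))) < 2 powr (1/3 * real k) * real (k+1)"
      proof -
        have "\<not> (2 powr (1/3 * real k) * real_of_int (ceiling (log 2 (real (fst (Net w))))) \<le> real (length (P (Net w))))"
          using neg valid[OF that] by blast
        then show ?thesis unfolding logn[of w] by linarith
      qed
      also have "\<dots> \<le> real m * real (k+1)" using pw by (intro mult_right_mono) auto
      finally show ?thesis by (metis of_nat_less_iff of_nat_mult)
    qed
    have inj: "inj_on (\<lambda>w. P (Net w)) F"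
    proof (rule inj_onI)
      fix w w' assume w: "w \<in> F" and w': "w' \<in> F" and eq: "P (Net w) = P (Net w')"
      have mc: "mincut (Net w) S = mincut (Net w') S" if "S \<subseteq> {..<k}" "S \<noteq> {}" "S \<noteq> {..<k}" for S
      proof -
        have "mincut (Net w) S = Qry S (P (Net w))"
          using TC valid[OF w] that unfolding TC_scheme_def by (simp add: Net_def)
        also have "\<dots> = Qry S (P (Net w'))" using eq by simp
        also have "\<dots> = mincut (Net w') S"
          using TC valid[OF w'] that unfolding TC_scheme_def by (simp add: Net_def)
        finally show ?thesis .
      qed
      show "w = w'"
      proof (rule PiE_ext[OF w[unfolded F_def] w'[unfolded F_def]])
        fix x assume x: "x \<in> {..<m}"
        let ?Y = "Yset p x"
        have Ysub: "?Y \<subseteq> {..<k} - {0}" using Yset_sub[OF pk] .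
        have Yne: "?Y \<noteq> {}" using Yset_card[of p x] p2 by auto
        have Yk: "?Y \<noteq> {..<k}" using Ysub pk by auto
        have sing: "mincut (Net w) {t} = mincut (Net w') {t}" if "t \<in> ?Y" for t
        proof -
          have t: "t < k" "t \<noteq> 0" using that Ysub by auto
          have "0 \<in> {..<k}" using t by auto
          then have "{t} \<noteq> {..<k}" using t by (metis singletonD)
          then show ?thesis using mc[of "{t}"] t by auto
        qed
        have "mincut (Net w) ?Y + w x = (\<Sum>t\<in>?Y. mincut (Net w) {t})"
          unfolding Net_def m_def using mincut_Y[OF p2 pk kn[unfolded m_def]] x sum_singles[OF p2 pk kn[unfolded m_def]]
          unfolding m_def by simp
        moreover have "mincut (Net w') ?Y + w' x = (\<Sum>t\<in>?Y. mincut (Net w') {t})"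
          unfolding Net_def m_def using mincut_Y[OF p2 pk kn[unfolded m_def]] x sum_singles[OF p2 pk kn[unfolded m_def]]
          unfolding m_def by simp
        moreover have "(\<Sum>t\<in>?Y. mincut (Net w) {t}) = (\<Sum>t\<in>?Y. mincut (Net w') {t})"
          using sing by (rule sum.cong[OF refl])
        moreover have "mincut (Net w) ?Y = mincut (Net w') ?Y" using mc Ysub Yne Yk by auto
        ultimately show "w x = w' x" by simp
      qed
    qed
    define L where "L = m * (k+1) - 1"
    have mk: "m * (k+1) = Suc L" unfolding L_def m_def by simp
    have sub: "(\<lambda>w. P (Net w)) ` F \<subseteq> {xs. set xs \<subseteq> (UNIV::bool set) \<and> length xs \<le> L}"
      using short unfolding L_def by fastforce
    have "card F = n ^ m" unfolding F_def by (simp add: card_PiE)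
    also have "\<dots> = 2 ^ (m * (k+1))" unfolding n_def by (simp add: power_mult[symmetric] mult.commute power_add)
    finally have cF: "card F = 2 ^ Suc L" using mk by simp
    have "card F = card ((\<lambda>w. P (Net w)) ` F)" using card_image[OF inj] by simp
    also have "\<dots> \<le> card {xs. set xs \<subseteq> (UNIV::bool set) \<and> length xs \<le> L}"
      by (rule card_mono[OF finite_lists_length_le sub]) simp
    also have "\<dots> = (\<Sum>i\<le>L. 2^i)" using card_lists_length_le[of "UNIV::bool set" L] by simp
    also have "\<dots> < 2 ^ Suc L" by (rule geom2)
    finally show False using cF by simp
  qed
qed

end
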